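(* Let $M$ be a loopless binary matroid on an $n$-element ground set $S$, of rank $r$. 1. If the ground set $S$ is colored with exactly $r$ colors (every color being used), then $M$ contains a rainbow colored circuit or a monochromatic cut. 2. If the ground set $S$ is colored with exactly $n-r$ colors (every color being used), then $M$ contains a rainbow colored cut or a monochromatic circuit.
   Context: A coloring of $S$ is a partition of $S$ into nonempty color classes. A subset of $S$ is rainbow colored if no two of its elements have the same color, and monochromatic if all its elements have the same color. A cut of a matroid is an inclusionwise minimal subset of the ground set intersecting every basis (equivalently, a circuit of the dual matroid). A matroid is binary if it is representable over $GF(2)$. *)

theory Defs
  imports Main "HOL-Library.Z2"
begin

definition matroid :: "'a set \<Rightarrow> ('a set \<Rightarrow> bool) \<Rightarrow> bool" where
  "matroid S indep \<longleftrightarrow>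
     finite S \<and>
     (\<forall>X. indep X \<longrightarrow> X \<subseteq> S) \<and>
     indep {} \<and>
     (\<forall>X Y. indep X \<and> Y \<subseteq> X \<longrightarrow> indep Y) \<and>
     (\<forall>X Y. indep X \<and> indep Y \<and> card X < card Y \<longrightarrow>
        (\<exists>e\<in>Y - X. indep (insert e X)))"

(* Linear independence over GF(2) of the columns {v e | e \<in> X} of a matrix with
   m rows (entries v e i, i < m); columns are indexed by elements, so repeated
   columns are dependent, exactly as in the column matroid of a matrix. *)
definition gf2_col_indep :: "nat \<Rightarrow> ('a \<Rightarrow> nat \<Rightarrow> bit) \<Rightarrow> 'a set \<Rightarrow> bool" where
  "gf2_col_indep m v X \<longleftrightarrow>
     (\<forall>c :: 'a \<Rightarrow> bit. (\<forall>i<m. (\<Sum>e\<in>X. c e * v e i) = 0) \<longrightarrow> (\<forall>e\<in>X. c e = 0))"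

definition binary_matroid :: "'a set \<Rightarrow> ('a set \<Rightarrow> bool) \<Rightarrow> bool" where
  "binary_matroid S indep \<longleftrightarrow> matroid S indep \<and>
     (\<exists>(m::nat) (v :: 'a \<Rightarrow> nat \<Rightarrow> bit). \<forall>X. X \<subseteq> S \<longrightarrow> (indep X \<longleftrightarrow> gf2_col_indep m v X))"

definition is_basis :: "'a set \<Rightarrow> ('a set \<Rightarrow> bool) \<Rightarrow> 'a set \<Rightarrow> bool" where
  "is_basis S indep B \<longleftrightarrow> B \<subseteq> S \<and> indep B \<and> (\<forall>X. B \<subset> X \<and> X \<subseteq> S \<longrightarrow> \<not> indep X)"

definition matroid_rank :: "'a set \<Rightarrow> ('a set \<Rightarrow> bool) \<Rightarrow> nat" where
  "matroid_rank S indep = Max (card ` {X. X \<subseteq> S \<and> indep X})"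

definition is_circuit :: "'a set \<Rightarrow> ('a set \<Rightarrow> bool) \<Rightarrow> 'a set \<Rightarrow> bool" where
  "is_circuit S indep C \<longleftrightarrow> C \<subseteq> S \<and> \<not> indep C \<and> (\<forall>D. D \<subset> C \<longrightarrow> indep D)"

definition is_cut :: "'a set \<Rightarrow> ('a set \<Rightarrow> bool) \<Rightarrow> 'a set \<Rightarrow> bool" where
  "is_cut S indep K \<longleftrightarrow> K \<subseteq> S \<and>
     (\<forall>B. is_basis S indep B \<longrightarrow> K \<inter> B \<noteq> {}) \<and>
     (\<forall>K'. K' \<subset> K \<longrightarrow> (\<exists>B. is_basis S indep B \<and> K' \<inter> B = {}))"

definition loopless :: "'a set \<Rightarrow> ('a set \<Rightarrow> bool) \<Rightarrow> bool" where
  "loopless S indep \<longleftrightarrow> (\<forall>e\<in>S. indep {e})"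

(* a coloring is given by a colour function col; the colour classes are the nonempty
   fibres of col on S, so the number of colours used is card (col ` S) *)
definition rainbow :: "('a \<Rightarrow> 'c) \<Rightarrow> 'a set \<Rightarrow> bool" where
  "rainbow col X \<longleftrightarrow> inj_on col X"

definition monochromatic :: "('a \<Rightarrow> 'c) \<Rightarrow> 'a set \<Rightarrow> bool" where
  "monochromatic col X \<longleftrightarrow> (\<forall>x\<in>X. \<forall>y\<in>X. col x = col y)"

end

theory Submission
  imports Defs
begin

declare add_bit_eq_xor[simp del] mult_bit_eq_and[simp del]

lemma minimal_good:
  fixes P :: "'a set" and g :: "'a \<Rightarrow> 'c" and Q :: "'c \<Rightarrow> 'a \<Rightarrow> bool"
  assumes finP: "finite P" and neP: "P \<noteq> {}" and allP: "\<forall>e\<in>P. \<exists>e'\<in>P. Q (g e) e'"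
  shows "\<exists>E. E \<subseteq> P \<and> E \<noteq> {} \<and> (\<forall>e\<in>E. \<exists>e'\<in>E. Q (g e) e') \<and> inj_on g E \<and>
           (\<forall>e\<in>E. \<forall>e1\<in>E. \<forall>e2\<in>E. Q (g e) e1 \<longrightarrow> Q (g e) e2 \<longrightarrow> e1 = e2)"
proof -
  let ?G = "\<lambda>E. E \<subseteq> P \<and> E \<noteq> {} \<and> (\<forall>e\<in>E. \<exists>e'\<in>E. Q (g e) e')"
  have "?G P" using assms by auto
  then obtain E where G: "?G E" and min: "\<And>E'. ?G E' \<Longrightarrow> card E \<le> card E'"
    using ex_has_least_nat[of ?G P card] by blast
  have finE: "finite E" using G finP finite_subset by blast
  have key: "inj_on q E \<and> q ` E = E" if q: "\<forall>e\<in>E. q e \<in> E \<and> Q (g e) (q e)" for q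
  proof -
    have sub: "q ` E \<subseteq> P" using q G by blast
    have ne: "q ` E \<noteq> {}" using G by blast
    have "\<forall>y\<in>q ` E. \<exists>e'\<in>q ` E. Q (g y) e'"
    proof
      fix y assume "y \<in> q ` E"
      then have "y \<in> E" using q by blast
      then show "\<exists>e'\<in>q ` E. Q (g y) e'" using q by blast
    qed
    then have "?G (q ` E)" using sub ne by blast
    then have "card E \<le> card (q ` E)" by (rule min)
    moreover have "card (q ` E) \<le> card E" using finE by (rule card_image_le)
    ultimately have c: "card (q ` E) = card E" by simp
    then have "inj_on q E" using finE eq_card_imp_inj_on by blast
    moreover have "q ` E = E" using c finE q by (intro card_subset_eq) auto
    ultimately show ?thesis by simp
  qed
  have "\<forall>e\<in>E. \<exists>e'. e' \<in> E \<and> Q (g e) e'" using G by blast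
  from bchoice[OF this] obtain q0 where q0: "\<forall>e\<in>E. q0 e \<in> E \<and> Q (g e) (q0 e)" by blast
  have injq0: "inj_on q0 E" and imq0: "q0 ` E = E" using key[OF q0] by auto
  have uniq: "e' = q0 e" if that1: "e \<in> E" and that2: "e' \<in> E" and that3: "Q (g e) e'" for e e'
  proof (rule ccontr)
    assume ne: "e' \<noteq> q0 e"
    have "e' \<in> q0 ` E" using imq0 that2 by simp
    then obtain x where x: "x \<in> E" "e' = q0 x" by auto
    have xe: "x \<noteq> e" using ne x by auto
    let ?q = "q0(e := e')"
    have "\<forall>y\<in>E. ?q y \<in> E \<and> Q (g y) (?q y)"
    proof
      fix y assume y: "y \<in> E"
      show "?q y \<in> E \<and> Q (g y) (?q y)"
      proof (cases "y = e")
        case True then show ?thesis using that2 that3 by simp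
      next
        case False then show ?thesis using q0 y by simp
      qed
    qed
    then have inj: "inj_on ?q E" using key[of ?q] by simp
    have "?q x = ?q e" using x xe by simp
    then have "x = e" by (rule inj_onD[OF inj _ x(1) that1])
    then show False using xe by simp
  qed
  have "inj_on g E"
  proof (rule inj_onI)
    fix e1 e2 assume e: "e1 \<in> E" "e2 \<in> E" "g e1 = g e2"
    have "Q (g e1) (q0 e1)" using q0 e(1) by blast
    then have "Q (g e2) (q0 e1)" using e(3) by simp
    then have "q0 e1 = q0 e2" using uniq[OF e(2)] q0 e(1) by simp
    then show "e1 = e2" by (rule inj_onD[OF injq0 _ e(1) e(2)])
  qed
  moreover have "\<forall>e\<in>E. \<forall>e1\<in>E. \<forall>e2\<in>E. Q (g e) e1 \<longrightarrow> Q (g e) e2 \<longrightarrow> e1 = e2"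
  proof (intro ballI impI)
    fix e e1 e2 assume "e \<in> E" "e1 \<in> E" "e2 \<in> E" "Q (g e) e1" "Q (g e) e2"
    then show "e1 = e2" using uniq by metis
  qed
  ultimately show ?thesis using G by (intro exI[of _ E]) simp
qed


locale bm =
  fixes S :: "'a set" and indep :: "'a set \<Rightarrow> bool" and m :: nat and v :: "'a \<Rightarrow> nat \<Rightarrow> bit"
  assumes mat: "matroid S indep"
    and rep: "\<And>X. X \<subseteq> S \<Longrightarrow> indep X \<longleftrightarrow> gf2_col_indep m v X"
begin

definition zs :: "('a \<Rightarrow> bit) \<Rightarrow> bool" where
  "zs c \<longleftrightarrow> (\<forall>i<m. (\<Sum>x\<in>S. c x * v x i) = 0)"

lemma finS: "finite S" using mat unfolding matroid_def by blast
lemma indep_sub: "indep X \<Longrightarrow> X \<subseteq> S" using mat unfolding matroid_def by blast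
lemma indep_empty: "indep {}" using mat unfolding matroid_def by blast
lemma indep_mono: "indep X \<Longrightarrow> Y \<subseteq> X \<Longrightarrow> indep Y" using mat unfolding matroid_def by blast
lemma augment: "indep X \<Longrightarrow> indep Y \<Longrightarrow> card X < card Y \<Longrightarrow> \<exists>e\<in>Y - X. indep (insert e X)"
  using mat unfolding matroid_def by blast

lemma indep_zero:
  assumes X: "X \<subseteq> S" and ind: "indep X" and z: "zs c" and off: "\<And>x. x \<notin> X \<Longrightarrow> c x = 0"
  shows "c x = 0"
proof (cases "x \<in> X")
  case True
  have g: "gf2_col_indep m v X" using rep X ind by blast
  have "\<forall>i<m. (\<Sum>e\<in>X. c e * v e i) = 0"
  proof (intro allI impI)
    fix i assume i: "i < m"
    have "(\<Sum>e\<in>X. c e * v e i) = (\<Sum>e\<in>S. c e * v e i)"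
      by (rule sum.mono_neutral_left) (use finS X off in auto)
    then show "(\<Sum>e\<in>X. c e * v e i) = 0" using z i unfolding zs_def by simp
  qed
  then show ?thesis using g True unfolding gf2_col_indep_def by blast
qed (use off in auto)

lemma dep_zs:
  assumes X: "X \<subseteq> S" and nind: "\<not> indep X"
  shows "\<exists>c. zs c \<and> (\<forall>x. x \<notin> X \<longrightarrow> c x = 0) \<and> (\<exists>x\<in>X. c x = 1)"
proof -
  have "\<not> gf2_col_indep m v X" using rep X nind by blast
  then obtain c x where c: "\<forall>i<m. (\<Sum>e\<in>X. c e * v e i) = 0" and x: "x \<in> X" "c x \<noteq> 0"
    unfolding gf2_col_indep_def by blast
  define c' where "c' = (\<lambda>y. if y \<in> X then c y else 0)"
  have "zs c'" unfolding zs_def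
  proof (intro allI impI)
    fix i assume i: "i < m"
    have "(\<Sum>y\<in>S. c' y * v y i) = (\<Sum>y\<in>X. c' y * v y i)"
      by (rule sum.mono_neutral_right) (use finS X in \<open>auto simp: c'_def\<close>)
    also have "\<dots> = (\<Sum>y\<in>X. c y * v y i)" by (simp add: c'_def)
    finally show "(\<Sum>y\<in>S. c' y * v y i) = 0" using c i by simp
  qed
  moreover have "\<forall>y. y \<notin> X \<longrightarrow> c' y = 0" by (simp add: c'_def)
  moreover have "c' x = 1" using x by (simp add: c'_def)
  ultimately show ?thesis using x by blast
qed

lemma zs_sum:
  assumes "finite E" "\<And>e. e \<in> E \<Longrightarrow> zs (F e)"
  shows "zs (\<lambda>x. \<Sum>e\<in>E. F e x)"
  unfolding zs_def
proof (intro allI impI)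
  fix i assume i: "i < m"
  have "(\<Sum>x\<in>S. (\<Sum>e\<in>E. F e x) * v x i) = (\<Sum>x\<in>S. \<Sum>e\<in>E. F e x * v x i)"
    by (simp add: sum_distrib_right)
  also have "\<dots> = (\<Sum>e\<in>E. \<Sum>x\<in>S. F e x * v x i)" by (rule sum.swap)
  also have "\<dots> = 0" using assms i unfolding zs_def by simp
  finally show "(\<Sum>x\<in>S. (\<Sum>e\<in>E. F e x) * v x i) = 0" .
qed

lemma zs_smult: "zs c \<Longrightarrow> zs (\<lambda>x. a * c x)"
  unfolding zs_def by (simp add: mult.assoc sum_distrib_left[symmetric])

lemma zs_add: "zs c \<Longrightarrow> zs d \<Longrightarrow> zs (\<lambda>x. c x + d x)"
  unfolding zs_def by (simp add: distrib_right sum.distrib)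

lemma zs_cong: "zs c \<Longrightarrow> (\<And>x. x \<in> S \<Longrightarrow> d x = c x) \<Longrightarrow> zs d"
  unfolding zs_def by simp

lemma rank_attained: "\<exists>X. X \<subseteq> S \<and> indep X \<and> card X = matroid_rank S indep"
proof -
  have "finite {X. X \<subseteq> S \<and> indep X}"
    by (rule finite_subset[of _ "Pow S"]) (use finS in auto)
  then have fin: "finite (card ` {X. X \<subseteq> S \<and> indep X})" by (rule finite_imageI)
  have "{} \<in> {X. X \<subseteq> S \<and> indep X}" by (simp add: indep_empty)
  then have "card ({}::'a set) \<in> card ` {X. X \<subseteq> S \<and> indep X}" by (rule imageI)
  then have ne: "card ` {X. X \<subseteq> S \<and> indep X} \<noteq> {}" by auto
  have "Max (card ` {X. X \<subseteq> S \<and> indep X}) \<in> card ` {X. X \<subseteq> S \<and> indep X}"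
    by (rule Max_in[OF fin ne])
  then obtain X where "X \<in> {X. X \<subseteq> S \<and> indep X}" "card X = Max (card ` {X. X \<subseteq> S \<and> indep X})"
    by auto
  then show ?thesis unfolding matroid_rank_def by blast
qed

lemma indep_card_le: "X \<subseteq> S \<Longrightarrow> indep X \<Longrightarrow> card X \<le> matroid_rank S indep"
  unfolding matroid_rank_def using finS by (intro Max_ge) auto

lemma max_indep_basis:
  assumes "X \<subseteq> S" "indep X" "card X = matroid_rank S indep"
  shows "is_basis S indep X"
  unfolding is_basis_def
proof (intro conjI allI impI assms(1,2))
  fix Y assume Y: "X \<subset> Y \<and> Y \<subseteq> S"
  have "finite Y" using Y finS finite_subset by blast
  then have "card X < card Y" using Y psubset_card_mono by blast
  then show "\<not> indep Y" using indep_card_le[of Y] Y assms(3) by linarith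
qed

lemma basis_card:
  assumes B: "is_basis S indep B" shows "card B = matroid_rank S indep"
proof -
  have BS: "B \<subseteq> S" and Bi: "indep B" using B unfolding is_basis_def by auto
  obtain X where X: "X \<subseteq> S" and Xi: "indep X" and Xc: "card X = matroid_rank S indep"
    using rank_attained by blast
  have "\<not> card B < card X"
  proof
    assume lt: "card B < card X"
    obtain e where e: "e \<in> X - B" and ei: "indep (insert e B)" using augment[OF Bi Xi lt] by blast
    have "B \<subset> insert e B" using e by auto
    moreover have "insert e B \<subseteq> S" using e X BS by auto
    ultimately have "\<not> indep (insert e B)" using B unfolding is_basis_def by blast
    then show False using ei by simp
  qed
  moreover have "card B \<le> matroid_rank S indep" by (rule indep_card_le[OF BS Bi])
  ultimately show ?thesis using Xc by linarith
qed

lemma fundamental: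
  assumes B: "is_basis S indep B" and e: "e \<in> S" "e \<notin> B"
  shows "\<exists>F. zs F \<and> (\<forall>x. x \<notin> insert e B \<longrightarrow> F x = 0) \<and> F e = 1"
proof -
  have BS: "B \<subseteq> S" "indep B" using B unfolding is_basis_def by auto
  have ps: "B \<subset> insert e B" using e by auto
  have sub: "insert e B \<subseteq> S" using e BS by auto
  have "\<not> indep (insert e B)" using B ps sub unfolding is_basis_def by blast
  from dep_zs[OF sub this] obtain c where c: "zs c" "\<forall>x. x \<notin> insert e B \<longrightarrow> c x = 0" "\<exists>x\<in>insert e B. c x = 1"
    by blast
  have "c e = 1"
  proof (rule ccontr)
    assume "c e \<noteq> 1"
    then have "c e = 0" by simp
    then have "\<And>x. x \<notin> B \<Longrightarrow> c x = 0" using c(2) by auto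
    then have "\<And>x. c x = 0" using indep_zero[OF BS(1) BS(2) c(1)] by blast
    then show False using c(3) by simp
  qed
  then show ?thesis using c by blast
qed

lemma dep_has_circuit:
  assumes "X \<subseteq> S" "\<not> indep X"
  shows "\<exists>C\<subseteq>X. is_circuit S indep C"
proof -
  let ?P = "\<lambda>Y. Y \<subseteq> X \<and> \<not> indep Y"
  obtain C where C: "?P C" and min: "\<And>Y. ?P Y \<Longrightarrow> card C \<le> card Y"
    using ex_has_least_nat[of ?P X card] assms by blast
  have finX: "finite X" using assms finS finite_subset by blast
  have "\<forall>D. D \<subset> C \<longrightarrow> indep D"
  proof (intro allI impI)
    fix D assume D: "D \<subset> C"
    have "finite C" using C finX finite_subset by blast
    then have "card D < card C" using D psubset_card_mono by blast
    then show "indep D" using min[of D] D C by force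
  qed
  then show ?thesis using C assms unfolding is_circuit_def by blast
qed

lemma meets_all_has_cut:
  assumes "X \<subseteq> S" "\<forall>B. is_basis S indep B \<longrightarrow> X \<inter> B \<noteq> {}"
  shows "\<exists>K\<subseteq>X. is_cut S indep K"
proof -
  let ?P = "\<lambda>Y. Y \<subseteq> X \<and> (\<forall>B. is_basis S indep B \<longrightarrow> Y \<inter> B \<noteq> {})"
  obtain K where K: "?P K" and min: "\<And>Y. ?P Y \<Longrightarrow> card K \<le> card Y"
    using ex_has_least_nat[of ?P X card] assms by blast
  have finX: "finite X" using assms finS finite_subset by blast
  have "\<forall>K'. K' \<subset> K \<longrightarrow> (\<exists>B. is_basis S indep B \<and> K' \<inter> B = {})"
  proof (intro allI impI)
    fix D assume D: "D \<subset> K"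
    have "finite K" using K finX finite_subset by blast
    then have "card D < card K" using D psubset_card_mono by blast
    then show "\<exists>B. is_basis S indep B \<and> D \<inter> B = {}" using min[of D] D K by force
  qed
  then show ?thesis using K assms unfolding is_cut_def by blast
qed

lemma transversal:
  fixes col :: "'a \<Rightarrow> 'c"
  shows "\<exists>B\<subseteq>S. inj_on col B \<and> col ` B = col ` S"
proof -
  define f where "f = (\<lambda>c. SOME x. x \<in> S \<and> col x = c)"
  have f: "f c \<in> S \<and> col (f c) = c" if "c \<in> col ` S" for c
    using that unfolding f_def by (metis (mono_tags, lifting) imageE someI)
  have "f ` (col ` S) \<subseteq> S" using f by blast
  moreover have "inj_on col (f ` (col ` S))"
    by (rule inj_onI) (use f in force)
  moreover have "col ` (f ` (col ` S)) = col ` S"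
    using f by (force simp: image_image)
  ultimately show ?thesis by blast
qed

theorem part1:
  fixes col :: "'a \<Rightarrow> 'c"
  assumes Sne: "S \<noteq> {}" and cc: "card (col ` S) = matroid_rank S indep"
    and norb: "\<not> (\<exists>C. is_circuit S indep C \<and> rainbow col C)"
  shows "\<exists>K. is_cut S indep K \<and> monochromatic col K"
proof -
  have rb_indep: "indep X" if XS: "X \<subseteq> S" and Xinj: "inj_on col X" for X
  proof (rule ccontr)
    assume "\<not> indep X"
    from dep_has_circuit[OF XS this] obtain C where CX: "C \<subseteq> X" and Cc: "is_circuit S indep C" by blast
    have "inj_on col C" using CX Xinj inj_on_subset by blast
    then show False using norb Cc unfolding rainbow_def by blast
  qed
  from transversal[of col] obtain B where BS: "B \<subseteq> S" and Binj: "inj_on col B" and Bcol: "col ` B = col ` S"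
    by blast
  have Bi: "indep B" by (rule rb_indep[OF BS Binj])
  have Bc: "card B = matroid_rank S indep" using card_image[OF Binj] Bcol cc by simp
  have Bb: "is_basis S indep B" by (rule max_indep_basis[OF BS Bi Bc])
  have Bne: "B \<noteq> {}" using Bcol Sne by auto
  have finB: "finite B" using BS finS finite_subset by blast
  define bc where "bc = (\<lambda>c. SOME b. b \<in> B \<and> col b = c)"
  have bc: "bc (col x) \<in> B \<and> col (bc (col x)) = col x" if xS: "x \<in> S" for x
  proof -
    have "col x \<in> col ` B" using xS Bcol by blast
    then obtain b where "b \<in> B \<and> col b = col x" by auto
    then show ?thesis unfolding bc_def by (rule someI)
  qed
  have bcB: "bc (col b) = b" if bB: "b \<in> B" for b
  proof -
    have "bc (col b) \<in> B" "col (bc (col b)) = col b" using bc[of b] bB BS by auto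
    then show ?thesis using inj_onD[OF Binj _ _ bB] by blast
  qed
  have "\<forall>e\<in>S-B. \<exists>G. zs G \<and> (\<forall>x. x \<notin> insert e B \<longrightarrow> G x = 0) \<and> G e = 1"
    using fundamental[OF Bb] by blast
  from bchoice[OF this] obtain F where
    Fall: "\<forall>e\<in>S-B. zs (F e) \<and> (\<forall>x. x \<notin> insert e B \<longrightarrow> F e x = 0) \<and> F e e = 1" by blast
  have Fz: "zs (F e)" if "e \<in> S - B" for e using Fall that by blast
  have Foff: "F e x = 0" if "e \<in> S - B" "x \<notin> insert e B" for e x using Fall that by blast
  have F1: "F e e = 1" if "e \<in> S - B" for e using Fall that by blast
  have Fb: "F e (bc (col e)) = 1" if e: "e \<in> S - B" for e
  proof (rule ccontr)
    assume "F e (bc (col e)) \<noteq> 1"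
    then have F0: "F e (bc (col e)) = 0" by simp
    let ?X = "insert e (B - {bc (col e)})"
    have XS: "?X \<subseteq> S" using e BS by auto
    have i1: "inj_on col (B - {bc (col e)})" using Binj inj_on_subset by blast
    have i2: "col e \<notin> col ` (B - {bc (col e)})"
    proof
      assume "col e \<in> col ` (B - {bc (col e)})"
      then obtain b where b1: "col e = col b" and b2: "b \<in> B - {bc (col e)}" by (rule imageE)
      have "bc (col b) = b" using bcB b2 by blast
      then show False using b1 b2 by simp
    qed
    have "B - {bc (col e)} - {e} = B - {bc (col e)}" using e by blast
    then have "inj_on col ?X" using i1 i2 by simp
    then have Xi: "indep ?X" by (rule rb_indep[OF XS])
    have "F e x = 0" if x: "x \<notin> ?X" for x
    proof (cases "x = bc (col e)")
      case True then show ?thesis using F0 by simp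
    next
      case False then have "x \<notin> insert e B" using x by blast
      then show ?thesis using Foff[OF e] by blast
    qed
    then have "F e e = 0" using indep_zero[OF XS Xi Fz[OF e]] by blast
    then show False using F1[OF e] by simp
  qed
  have src: "\<exists>b0\<in>B. \<forall>e\<in>S-B. col e \<noteq> col b0 \<longrightarrow> F e b0 = 0"
  proof (rule ccontr)
    assume ns: "\<not> (\<exists>b0\<in>B. \<forall>e\<in>S-B. col e \<noteq> col b0 \<longrightarrow> F e b0 = 0)"
    have wit: "\<exists>e\<in>S-B. col e \<noteq> col b \<and> F e b \<noteq> 0" if bB: "b \<in> B" for b
      using ns bB by blast
    define Q where "Q = (\<lambda>c e'. col e' \<noteq> c \<and> F e' (bc c) \<noteq> 0)"
    have allP: "\<forall>e\<in>S-B. \<exists>e'\<in>S-B. Q (col e) e'"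
    proof
      fix e assume e: "e \<in> S - B"
      have b: "bc (col e) \<in> B" "col (bc (col e)) = col e" using bc e by auto
      from wit[OF b(1)] obtain e' where "e' \<in> S - B" "col e' \<noteq> col (bc (col e))" "F e' (bc (col e)) \<noteq> 0"
        by blast
      then show "\<exists>e'\<in>S-B. Q (col e) e'" using b(2) unfolding Q_def by auto
    qed
    obtain b1 where b1: "b1 \<in> B" using Bne by blast
    have Pne: "S - B \<noteq> {}" using wit[OF b1] by blast
    have finP: "finite (S - B)" using finS by simp
    from minimal_good[where Q=Q and g=col, OF finP Pne allP] obtain E where
      EP: "E \<subseteq> S - B" and Ene: "E \<noteq> {}" and Egood: "\<forall>e\<in>E. \<exists>e'\<in>E. Q (col e) e'"
      and Einj: "inj_on col E"
      and Euniq: "\<forall>e\<in>E. \<forall>e1\<in>E. \<forall>e2\<in>E. Q (col e) e1 \<longrightarrow> Q (col e) e2 \<longrightarrow> e1 = e2"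
      by blast
    have finE: "finite E" using finP EP finite_subset by blast
    define Z where "Z = (\<lambda>x. \<Sum>e\<in>E. F e x)"
    have Zz: "zs Z" unfolding Z_def
    proof (rule zs_sum[OF finE])
      fix e assume "e \<in> E" then show "zs (F e)" using EP Fz by blast
    qed
    let ?Y = "E \<union> (B - bc ` col ` E)"
    have YS: "?Y \<subseteq> S" using EP BS by blast
    have Yinj: "inj_on col ?Y"
    proof (rule inj_onI)
      fix x y assume x: "x \<in> ?Y" and y: "y \<in> ?Y" and xy: "col x = col y"
      show "x = y"
      proof (cases "x \<in> E")
        case xE: True
        show ?thesis
        proof (cases "y \<in> E")
          case True then show ?thesis by (rule inj_onD[OF Einj xy xE])
        next
          case False
          then have yB: "y \<in> B" "y \<notin> bc ` col ` E" using y by auto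
          have "y = bc (col y)" using bcB[OF yB(1)] by simp
          also have "\<dots> = bc (col x)" using xy by simp
          finally have "y \<in> bc ` col ` E" using xE by blast
          then show ?thesis using yB by simp
        qed
      next
        case xnE: False
        then have xB: "x \<in> B" "x \<notin> bc ` col ` E" using x by auto
        show ?thesis
        proof (cases "y \<in> E")
          case True
          have "x = bc (col x)" using bcB[OF xB(1)] by simp
          also have "\<dots> = bc (col y)" using xy by simp
          finally have "x \<in> bc ` col ` E" using True by blast
          then show ?thesis using xB by simp
        next
          case False
          then have "y \<in> B" using y by auto
          then show ?thesis by (rule inj_onD[OF Binj xy xB(1)])
        qed
      qed
    qed
    have Yi: "indep ?Y" by (rule rb_indep[OF YS Yinj])
    have Zoff: "Z x = 0" if x: "x \<notin> ?Y" for x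
    proof (cases "x \<in> bc ` col ` E")
      case True
      then obtain e0 where e0: "e0 \<in> E" and xe0: "x = bc (col e0)" by auto
      obtain w where w: "w \<in> E" "Q (col e0) w" using Egood e0 by blast
      have e0S: "e0 \<in> S - B" using EP e0 by blast
      have we0: "w \<noteq> e0" using w(2) unfolding Q_def by auto
      have supp: "F e x = 0" if e: "e \<in> E - {e0, w}" for e
      proof (rule ccontr)
        assume nz: "F e x \<noteq> 0"
        show False
        proof (cases "col e = col e0")
          case True
          have "e = e0" using inj_onD[OF Einj True] e e0 by blast
          then show False using e by simp
        next
          case False
          then have "Q (col e0) e" using nz xe0 unfolding Q_def by simp
          then have "e = w" using Euniq e0 e w by blast
          then show False using e by simp
        qed
      qed
      have "Z x = (\<Sum>e\<in>{e0, w}. F e x)" unfolding Z_def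
        by (rule sum.mono_neutral_right) (use finE e0 w supp in auto)
      also have "\<dots> = F e0 x + F w x" using we0 by simp
      also have "F e0 x = 1" using Fb[OF e0S] xe0 by simp
      also have "F w x = 1" using w(2) xe0 unfolding Q_def by simp
      finally show ?thesis by simp
    next
      case False
      then have xnB: "x \<notin> B" and xnE: "x \<notin> E" using x by auto
      have "F e x = 0" if eE: "e \<in> E" for e
      proof -
        have "x \<notin> insert e B" using xnB xnE eE by auto
        then show ?thesis using Foff eE EP by blast
      qed
      then show ?thesis unfolding Z_def by simp
    qed
    from Ene obtain e0 where e0: "e0 \<in> E" by blast
    have "Z e0 = 0" by (rule indep_zero[OF YS Yi Zz Zoff])
    moreover have "Z e0 = 1"
    proof -
      have "F e e0 = 0" if eE: "e \<in> E - {e0}" for e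
      proof -
        have "e0 \<notin> insert e B" using eE e0 EP by auto
        then show ?thesis using Foff eE EP by blast
      qed
      then have "Z e0 = (\<Sum>e\<in>{e0}. F e e0)" unfolding Z_def
        by (intro sum.mono_neutral_right) (use finE e0 in auto)
      then show ?thesis using F1 EP e0 by auto
    qed
    ultimately show False by simp
  qed
  then obtain b0 where b0: "b0 \<in> B" and b0src: "\<And>e. e \<in> S - B \<Longrightarrow> col e \<noteq> col b0 \<Longrightarrow> F e b0 = 0"
    by blast
  let ?A = "{x \<in> S. col x = col b0}"
  have meets: "\<forall>B'. is_basis S indep B' \<longrightarrow> ?A \<inter> B' \<noteq> {}"
  proof (intro allI impI)
    fix B' assume B': "is_basis S indep B'"
    show "?A \<inter> B' \<noteq> {}"
    proof
      assume disj: "?A \<inter> B' = {}"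
      have B'S: "B' \<subseteq> S" and B'i: "indep B'" using B' unfolding is_basis_def by auto
      have cB': "card B' = matroid_rank S indep" by (rule basis_card[OF B'])
      have Bmi: "indep (B - {b0})" using Bi indep_mono by blast
      have "card B > 0" using finB Bne by (simp add: card_gt_0_iff)
      then have lt: "card (B - {b0}) < card B'" using b0 finB Bc cB' by (simp add: card_Diff_singleton)
      from augment[OF Bmi B'i lt] obtain e where e: "e \<in> B' - (B - {b0})"
        and ei: "indep (insert e (B - {b0}))" by blast
      have eS: "e \<in> S" using e B'S by blast
      have ecol: "col e \<noteq> col b0" using e eS disj by blast
      have eb0: "e \<noteq> b0" using ecol by blast
      have eSB: "e \<in> S - B" using eS e eb0 by blast
      let ?X = "insert e (B - {b0})"
      have XS: "?X \<subseteq> S" using eS BS by blast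
      have "F e x = 0" if x: "x \<notin> ?X" for x
      proof (cases "x = b0")
        case True then show ?thesis using b0src[OF eSB ecol] by simp
      next
        case False then have "x \<notin> insert e B" using x by blast
        then show ?thesis using Foff[OF eSB] by blast
      qed
      then have "F e e = 0" using indep_zero[OF XS ei Fz[OF eSB]] by blast
      then show False using F1[OF eSB] by simp
    qed
  qed
  have AS: "?A \<subseteq> S" by blast
  from meets_all_has_cut[OF AS meets] obtain K where KA: "K \<subseteq> ?A" and Kc: "is_cut S indep K" by blast
  have "monochromatic col K" unfolding monochromatic_def
  proof (intro ballI)
    fix x y assume "x \<in> K" "y \<in> K"
    then have "col x = col b0" "col y = col b0" using KA by blast+
    then show "col x = col y" by simp
  qed
  then show ?thesis using Kc by blast
qed

lemma bit_add_self: "(a::bit) + a = 0"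
  by (simp add: add_bit_eq_xor)

lemma bit_add_eq0: "(a::bit) + b = 0 \<Longrightarrow> a = b"
  by (cases a; cases b) (simp_all add: add_bit_eq_xor)

theorem part2:
  fixes col :: "'a \<Rightarrow> 'c"
  assumes Sne: "S \<noteq> {}" and cc: "card (col ` S) = card S - matroid_rank S indep"
    and nomc: "\<not> (\<exists>C. is_circuit S indep C \<and> monochromatic col C)"
  shows "\<exists>K. is_cut S indep K \<and> rainbow col K"
proof (rule ccontr)
  assume norc: "\<not> (\<exists>K. is_cut S indep K \<and> rainbow col K)"
  have miss: "\<exists>B'. is_basis S indep B' \<and> X \<inter> B' = {}" if XS: "X \<subseteq> S" and Xinj: "inj_on col X" for X
  proof (rule ccontr)
    assume "\<not> (\<exists>B'. is_basis S indep B' \<and> X \<inter> B' = {})"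
    then have "\<forall>B'. is_basis S indep B' \<longrightarrow> X \<inter> B' \<noteq> {}" by blast
    from meets_all_has_cut[OF XS this] obtain K where KX: "K \<subseteq> X" and Kc: "is_cut S indep K" by blast
    have "inj_on col K" using KX Xinj inj_on_subset by blast
    then show False using norc Kc unfolding rainbow_def by blast
  qed
  have mono_indep: "indep X" if XS: "X \<subseteq> S" and Xm: "\<forall>x\<in>X. col x = c" for X c
  proof (rule ccontr)
    assume "\<not> indep X"
    from dep_has_circuit[OF XS this] obtain C where CX: "C \<subseteq> X" and Cc: "is_circuit S indep C" by blast
    have "monochromatic col C" unfolding monochromatic_def
    proof (intro ballI)
      fix x y assume "x \<in> C" "y \<in> C"
      then have "col x = c" "col y = c" using CX Xm by blast+
      then show "col x = col y" by simp
    qed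
    then show False using nomc Cc by blast
  qed
  from transversal[of col] obtain T where TS: "T \<subseteq> S" and Tinj: "inj_on col T" and Tcol: "col ` T = col ` S"
    by blast
  have finT: "finite T" using TS finS finite_subset by blast
  have cT: "card T = card S - matroid_rank S indep" using card_image[OF Tinj] Tcol cc by simp
  from miss[OF TS Tinj] obtain B0 where B0: "is_basis S indep B0" and B0T: "T \<inter> B0 = {}" by blast
  have B0S: "B0 \<subseteq> S" using B0 unfolding is_basis_def by blast
  have cB0: "card B0 = matroid_rank S indep" by (rule basis_card[OF B0])
  define B where "B = S - T"
  have finB: "finite B" unfolding B_def using finS by simp
  have B0sub: "B0 \<subseteq> B" using B0S B0T unfolding B_def by blast
  have rle: "matroid_rank S indep \<le> card S" using cB0 card_mono[OF finS B0S] by simp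
  have cB: "card B = matroid_rank S indep"
    unfolding B_def using card_Diff_subset[OF finT TS] cT rle by simp
  have "B0 = B" using card_subset_eq[OF finB B0sub] cB cB0 by simp
  then have Bb: "is_basis S indep B" using B0 by simp
  have BS: "B \<subseteq> S" and Bi: "indep B" using Bb unfolding is_basis_def by auto
  have TB: "T = S - B" unfolding B_def using TS by blast
  have BT: "B \<inter> T = {}" unfolding B_def by blast
  have Tne: "T \<noteq> {}" using Tcol Sne by auto
  define tc where "tc = (\<lambda>c. SOME t. t \<in> T \<and> col t = c)"
  have tc: "tc (col x) \<in> T \<and> col (tc (col x)) = col x" if xS: "x \<in> S" for x
  proof -
    have "col x \<in> col ` T" using xS Tcol by blast
    then obtain t where "t \<in> T \<and> col t = col x" by auto
    then show ?thesis unfolding tc_def by (rule someI)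
  qed
  have tcT: "tc (col t) = t" if tT: "t \<in> T" for t
  proof -
    have "tc (col t) \<in> T" "col (tc (col t)) = col t" using tc[of t] tT TS by auto
    then show ?thesis using inj_onD[OF Tinj _ _ tT] by blast
  qed
  have "\<forall>t\<in>T. \<exists>G. zs G \<and> (\<forall>x. x \<notin> insert t B \<longrightarrow> G x = 0) \<and> G t = 1"
  proof
    fix t assume "t \<in> T"
    then have "t \<in> S" "t \<notin> B" using TB by auto
    then show "\<exists>G. zs G \<and> (\<forall>x. x \<notin> insert t B \<longrightarrow> G x = 0) \<and> G t = 1"
      using fundamental[OF Bb] by blast
  qed
  from bchoice[OF this] obtain F where
    Fall: "\<forall>t\<in>T. zs (F t) \<and> (\<forall>x. x \<notin> insert t B \<longrightarrow> F t x = 0) \<and> F t t = 1" by blast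
  have Fz: "zs (F t)" if "t \<in> T" for t using Fall that by blast
  have Foff: "F t x = 0" if "t \<in> T" "x \<notin> insert t B" for t x using Fall that by blast
  have F1: "F t t = 1" if "t \<in> T" for t using Fall that by blast
  have Fb: "F (tc (col b)) b = 1" if bB: "b \<in> B" for b
  proof (rule ccontr)
    let ?t = "tc (col b)"
    have bS: "b \<in> S" using bB BS by blast
    have tT: "?t \<in> T" and tcol: "col ?t = col b" using tc[OF bS] by auto
    assume "F ?t b \<noteq> 1"
    then have F0: "F ?t b = 0" by simp
    let ?X = "insert b (T - {?t})"
    have XS: "?X \<subseteq> S" using bS TS by auto
    have i1: "inj_on col (T - {?t})" using Tinj inj_on_subset by blast
    have i2: "col b \<notin> col ` (T - {?t})"
    proof
      assume "col b \<in> col ` (T - {?t})"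
      then obtain t' where t1: "col b = col t'" and t2: "t' \<in> T - {?t}" by (rule imageE)
      have "tc (col t') = t'" using tcT t2 by blast
      then show False using t1 t2 by simp
    qed
    have "T - {?t} - {b} = T - {?t}" using bB BT by blast
    then have "inj_on col ?X" using i1 i2 by simp
    from miss[OF XS this] obtain B' where B': "is_basis S indep B'" and B'X: "?X \<inter> B' = {}" by blast
    have B'S: "B' \<subseteq> S" using B' unfolding is_basis_def by blast
    let ?B2 = "insert ?t (B - {b})"
    have B'sub: "B' \<subseteq> ?B2"
    proof
      fix y assume y: "y \<in> B'"
      then have yS: "y \<in> S" and yX: "y \<notin> ?X" using B'S B'X by blast+
      show "y \<in> ?B2"
      proof (cases "y \<in> T")
        case True then show ?thesis using yX by blast
      next
        case False then show ?thesis using yS yX TB by blast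
      qed
    qed
    have finB2: "finite ?B2" using finB by simp
    have "?t \<notin> B - {b}" using tT BT by blast
    then have cB2: "card ?B2 = card (B - {b}) + 1" using finB by simp
    have "card B > 0" using finB bB by (auto simp: card_gt_0_iff)
    then have "card ?B2 = card B" using cB2 bB finB by (simp add: card_Diff_singleton)
    then have "card B' = card ?B2" using basis_card[OF B'] cB by simp
    then have "B' = ?B2" using card_subset_eq[OF finB2 B'sub] by simp
    then have B2i: "indep ?B2" using B' unfolding is_basis_def by blast
    have B2S: "?B2 \<subseteq> S" using tT TS BS by blast
    have "F ?t x = 0" if x: "x \<notin> ?B2" for x
    proof (cases "x = b")
      case True then show ?thesis using F0 by simp
    next
      case False then have "x \<notin> insert ?t B" using x by blast
      then show ?thesis using Foff[OF tT] by blast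
    qed
    then have "F ?t ?t = 0" using indep_zero[OF B2S B2i Fz[OF tT]] by blast
    then show False using F1[OF tT] by simp
  qed
  have src: "\<exists>t0\<in>T. \<forall>b\<in>B. col b \<noteq> col t0 \<longrightarrow> F t0 b = 0"
  proof (rule ccontr)
    assume ns: "\<not> (\<exists>t0\<in>T. \<forall>b\<in>B. col b \<noteq> col t0 \<longrightarrow> F t0 b = 0)"
    have wit: "\<exists>b\<in>B. col b \<noteq> col t \<and> F t b \<noteq> 0" if tT: "t \<in> T" for t
      using ns tT by blast
    define Q where "Q = (\<lambda>c b'. col b' \<noteq> c \<and> F (tc c) b' \<noteq> 0)"
    have allP: "\<forall>b\<in>B. \<exists>b'\<in>B. Q (col b) b'"
    proof
      fix b assume bB: "b \<in> B"
      then have bS: "b \<in> S" using BS by blast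
      have t: "tc (col b) \<in> T" "col (tc (col b)) = col b" using tc[OF bS] by auto
      from wit[OF t(1)] obtain b' where "b' \<in> B" "col b' \<noteq> col (tc (col b))" "F (tc (col b)) b' \<noteq> 0"
        by blast
      then show "\<exists>b'\<in>B. Q (col b) b'" using t(2) unfolding Q_def by auto
    qed
    obtain t1 where t1: "t1 \<in> T" using Tne by blast
    have Pne: "B \<noteq> {}" using wit[OF t1] by blast
    from minimal_good[where Q=Q and g=col, OF finB Pne allP] obtain E where
      EP: "E \<subseteq> B" and Ene: "E \<noteq> {}" and Egood: "\<forall>e\<in>E. \<exists>e'\<in>E. Q (col e) e'"
      and Einj: "inj_on col E"
      and Euniq: "\<forall>e\<in>E. \<forall>e1\<in>E. \<forall>e2\<in>E. Q (col e) e1 \<longrightarrow> Q (col e) e2 \<longrightarrow> e1 = e2"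
      by blast
    have finE: "finite E" using finB EP finite_subset by blast
    define Cs where "Cs = (\<lambda>b x. (if x = b then 1 else 0) + (if x \<in> T then F x b else (0::bit)))"
    have Cs_cz: "(\<Sum>x\<in>S. c x * Cs b x) = 0" if bB: "b \<in> B" and zc: "zs c" for b c
    proof -
      have bS: "b \<in> S" using bB BS by blast
      define W where "W = (\<lambda>x. \<Sum>t\<in>T. c t * F t x)"
      have zW: "zs W" unfolding W_def
      proof (rule zs_sum[OF finT])
        fix t assume "t \<in> T" then show "zs (\<lambda>x. c t * F t x)" using zs_smult Fz by blast
      qed
      define c2 where "c2 = (\<lambda>x. if x \<in> S then c x + W x else 0)"
      have z2: "zs c2" by (rule zs_cong[OF zs_add[OF zc zW]]) (simp add: c2_def)
      have WT: "W x = c x" if xT: "x \<in> T" for x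
      proof -
        have "W x = c x * F x x + (\<Sum>t\<in>T - {x}. c t * F t x)"
          unfolding W_def by (rule sum.remove[OF finT xT])
        moreover have "(\<Sum>t\<in>T - {x}. c t * F t x) = 0"
        proof (rule sum.neutral, rule ballI)
          fix t assume t: "t \<in> T - {x}"
          have "x \<notin> insert t B" using t xT BT by blast
          then show "c t * F t x = 0" using Foff t by simp
        qed
        ultimately show ?thesis using F1[OF xT] by simp
      qed
      have off2: "c2 x = 0" if xB: "x \<notin> B" for x
      proof (cases "x \<in> S")
        case True
        then have "x \<in> T" using xB TB by blast
        then show ?thesis using True WT bit_add_self unfolding c2_def by simp
      next
        case False then show ?thesis unfolding c2_def by simp
      qed
      have c2z: "c2 x = 0" for x by (rule indep_zero[OF BS Bi z2 off2])
      have cW: "c x = W x" if xS: "x \<in> S" for x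
        using c2z[of x] xS bit_add_eq0 unfolding c2_def by simp
      have "(\<Sum>x\<in>S. c x * Cs b x) = (\<Sum>x\<in>S. c x * (if x = b then 1 else 0)) + (\<Sum>x\<in>S. c x * (if x \<in> T then F x b else 0))"
        unfolding Cs_def by (simp add: distrib_left sum.distrib)
      moreover have "(\<Sum>x\<in>S. c x * (if x = b then 1 else 0)) = c b"
      proof -
        have "(\<Sum>x\<in>S. c x * (if x = b then 1 else 0)) = c b * 1 + (\<Sum>x\<in>S - {b}. c x * (if x = b then 1 else 0))"
          by (subst sum.remove[OF finS bS]) simp
        moreover have "(\<Sum>x\<in>S - {b}. c x * (if x = b then 1 else (0::bit))) = 0" by (rule sum.neutral) simp
        ultimately show ?thesis by simp
      qed
      moreover have "(\<Sum>x\<in>S. c x * (if x \<in> T then F x b else 0)) = W b"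
      proof -
        have "(\<Sum>x\<in>S. c x * (if x \<in> T then F x b else 0)) = (\<Sum>x\<in>T. c x * (if x \<in> T then F x b else 0))"
          by (rule sum.mono_neutral_right[OF finS TS]) simp
        also have "\<dots> = (\<Sum>x\<in>T. c x * F x b)" by simp
        finally show ?thesis unfolding W_def .
      qed
      ultimately show ?thesis using cW[OF bS] bit_add_self by simp
    qed
    define d where "d = (\<lambda>x. \<Sum>b\<in>E. Cs b x)"
    have dcz: "(\<Sum>x\<in>S. c x * d x) = 0" if zc: "zs c" for c
    proof -
      have "(\<Sum>x\<in>S. c x * d x) = (\<Sum>x\<in>S. \<Sum>b\<in>E. c x * Cs b x)" unfolding d_def by (simp add: sum_distrib_left)
      also have "\<dots> = (\<Sum>b\<in>E. \<Sum>x\<in>S. c x * Cs b x)" by (rule sum.swap)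
      also have "\<dots> = 0" using Cs_cz EP zc by (simp add: subset_iff)
      finally show ?thesis .
    qed
    let ?Y = "E \<union> (T - tc ` col ` E)"
    have YS: "?Y \<subseteq> S" using EP BS TS by blast
    have Yinj: "inj_on col ?Y"
    proof (rule inj_onI)
      fix x y assume x: "x \<in> ?Y" and y: "y \<in> ?Y" and xy: "col x = col y"
      show "x = y"
      proof (cases "x \<in> E")
        case xE: True
        show ?thesis
        proof (cases "y \<in> E")
          case True then show ?thesis by (rule inj_onD[OF Einj xy xE])
        next
          case False
          then have yT: "y \<in> T" "y \<notin> tc ` col ` E" using y by auto
          have "y = tc (col y)" using tcT[OF yT(1)] by simp
          also have "\<dots> = tc (col x)" using xy by simp
          finally have "y \<in> tc ` col ` E" using xE by blast
          then show ?thesis using yT by simp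
        qed
      next
        case xnE: False
        then have xT: "x \<in> T" "x \<notin> tc ` col ` E" using x by auto
        show ?thesis
        proof (cases "y \<in> E")
          case True
          have "x = tc (col x)" using tcT[OF xT(1)] by simp
          also have "\<dots> = tc (col y)" using xy by simp
          finally have "x \<in> tc ` col ` E" using True by blast
          then show ?thesis using xT by simp
        next
          case False
          then have "y \<in> T" using y by auto
          then show ?thesis by (rule inj_onD[OF Tinj xy xT(1)])
        qed
      qed
    qed
    have doff: "d x = 0" if x: "x \<notin> ?Y" for x
    proof (cases "x \<in> tc ` col ` E")
      case True
      then obtain e0 where e0: "e0 \<in> E" and xe0: "x = tc (col e0)" by auto
      have e0B: "e0 \<in> B" using EP e0 by blast
      have e0S: "e0 \<in> S" using e0B BS by blast
      have xT: "x \<in> T" using tc[OF e0S] xe0 by simp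
      have Csx: "Cs b x = F x b" if "b \<in> E" for b
      proof -
        have "x \<noteq> b" using that EP xT BT by blast
        then show ?thesis unfolding Cs_def using xT by simp
      qed
      obtain w where w: "w \<in> E" "Q (col e0) w" using Egood e0 by blast
      have we0: "w \<noteq> e0" using w(2) unfolding Q_def by auto
      have supp: "Cs e x = 0" if e: "e \<in> E - {e0, w}" for e
      proof (rule ccontr)
        assume "Cs e x \<noteq> 0"
        then have nz: "F x e \<noteq> 0" using Csx e by simp
        show False
        proof (cases "col e = col e0")
          case True
          have "e = e0" using inj_onD[OF Einj True] e e0 by blast
          then show False using e by simp
        next
          case False
          then have "Q (col e0) e" using nz xe0 unfolding Q_def by simp
          then have "e = w" using Euniq e0 e w by blast
          then show False using e by simp
        qed
      qed
      have "d x = (\<Sum>e\<in>{e0, w}. Cs e x)" unfolding d_def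
        by (rule sum.mono_neutral_right) (use finE e0 w supp in auto)
      also have "\<dots> = Cs e0 x + Cs w x" using we0 by simp
      also have "Cs e0 x = 1" using Csx[OF e0] Fb[OF e0B] xe0 by simp
      also have "Cs w x = 1" using Csx[OF w(1)] w(2) xe0 unfolding Q_def by simp
      finally show ?thesis by simp
    next
      case False
      then have xnT: "x \<notin> T" and xnE: "x \<notin> E" using x by auto
      have "Cs b x = 0" if bE: "b \<in> E" for b
        using xnT xnE bE unfolding Cs_def by auto
      then show ?thesis unfolding d_def by simp
    qed
    have meets: "\<forall>B'. is_basis S indep B' \<longrightarrow> ?Y \<inter> B' \<noteq> {}"
    proof (intro allI impI)
      fix B' assume B': "is_basis S indep B'"
      show "?Y \<inter> B' \<noteq> {}"
      proof
        assume disj: "?Y \<inter> B' = {}"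
        from Ene obtain e0 where e0: "e0 \<in> E" by blast
        have e0S: "e0 \<in> S" using e0 EP BS by blast
        have e0B': "e0 \<notin> B'" using e0 disj by blast
        from fundamental[OF B' e0S e0B'] obtain G where
          Gz: "zs G" and Goff: "\<forall>x. x \<notin> insert e0 B' \<longrightarrow> G x = 0" and G1: "G e0 = 1" by blast
        have de0: "d e0 = 1"
        proof -
          have e0nT: "e0 \<notin> T" using e0 EP BT by blast
          have "d e0 = Cs e0 e0 + (\<Sum>b\<in>E - {e0}. Cs b e0)" unfolding d_def by (rule sum.remove[OF finE e0])
          moreover have "(\<Sum>b\<in>E - {e0}. Cs b e0) = 0"
            by (rule sum.neutral) (use e0nT in \<open>auto simp: Cs_def\<close>)
          moreover have "Cs e0 e0 = 1" using e0nT unfolding Cs_def by simp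
          ultimately show ?thesis by simp
        qed
        have "(\<Sum>x\<in>S. G x * d x) = G e0 * d e0 + (\<Sum>x\<in>S - {e0}. G x * d x)"
          by (rule sum.remove[OF finS e0S])
        moreover have "(\<Sum>x\<in>S - {e0}. G x * d x) = 0"
        proof (rule sum.neutral, rule ballI)
          fix x assume x: "x \<in> S - {e0}"
          show "G x * d x = 0"
          proof (cases "x \<in> B'")
            case True
            then have "x \<notin> ?Y" using disj by blast
            then show ?thesis using doff by simp
          next
            case False
            then show ?thesis using Goff x by simp
          qed
        qed
        ultimately have "(\<Sum>x\<in>S. G x * d x) = 1" using G1 de0 by simp
        then show False using dcz[OF Gz] by simp
      qed
    qed
    from meets_all_has_cut[OF YS meets] obtain K where KY: "K \<subseteq> ?Y" and Kc: "is_cut S indep K" by blast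
    have "inj_on col K" using KY Yinj inj_on_subset by blast
    then show False using norc Kc unfolding rainbow_def by blast
  qed
  then obtain t0 where t0: "t0 \<in> T" and t0src: "\<And>b. b \<in> B \<Longrightarrow> col b \<noteq> col t0 \<Longrightarrow> F t0 b = 0"
    by blast
  let ?A = "{x \<in> S. col x = col t0}"
  have AS: "?A \<subseteq> S" by blast
  have Ai: "indep ?A" by (rule mono_indep[OF AS, of "col t0"]) simp
  have t0S: "t0 \<in> S" using t0 TS by blast
  have "F t0 x = 0" if x: "x \<notin> ?A" for x
  proof (cases "x \<in> B")
    case True
    then have "col x \<noteq> col t0" using x BS by blast
    then show ?thesis using t0src True by blast
  next
    case False
    have "x \<noteq> t0" using x t0S by blast
    then have "x \<notin> insert t0 B" using False by blast
    then show ?thesis using Foff[OF t0] by blast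
  qed
  then have "F t0 t0 = 0" using indep_zero[OF AS Ai Fz[OF t0]] by blast
  then show False using F1[OF t0] by simp
qed

end


theorem theorem1:
  fixes S :: "'a set" and indep :: "'a set \<Rightarrow> bool"
    and n r :: nat
  assumes "binary_matroid S indep"
    and "loopless S indep"
    and "S \<noteq> {}"
    and "card S = n"
    and "matroid_rank S indep = r"
  shows "(\<forall>col :: 'a \<Rightarrow> nat. card (col ` S) = r \<longrightarrow>
            (\<exists>C. is_circuit S indep C \<and> rainbow col C) \<or>
            (\<exists>K. is_cut S indep K \<and> monochromatic col K))
       \<and> (\<forall>col :: 'a \<Rightarrow> nat. card (col ` S) = n - r \<longrightarrow>
            (\<exists>K. is_cut S indep K \<and> rainbow col K) \<or>
            (\<exists>C. is_circuit S indep C \<and> monochromatic col C))"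
proof -
  from assms(1) obtain m v where mat: "matroid S indep"
    and rep: "\<forall>X. X \<subseteq> S \<longrightarrow> (indep X \<longleftrightarrow> gf2_col_indep m v X)"
    unfolding binary_matroid_def by blast
  interpret bm S indep m v
    by unfold_locales (use mat rep in auto)
  show ?thesis
  proof (intro conjI allI impI)
    fix col :: "'a \<Rightarrow> nat" assume c: "card (col ` S) = r"
    show "(\<exists>C. is_circuit S indep C \<and> rainbow col C) \<or> (\<exists>K. is_cut S indep K \<and> monochromatic col K)"
    proof (cases "\<exists>C. is_circuit S indep C \<and> rainbow col C")
      case True then show ?thesis by blast
    next
      case False
      have "card (col ` S) = matroid_rank S indep" using c assms(5) by simp
      then show ?thesis using part1[OF assms(3) _ False] by blast
    qed
  next
    fix col :: "'a \<Rightarrow> nat" assume c: "card (col ` S) = n - r"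
    show "(\<exists>K. is_cut S indep K \<and> rainbow col K) \<or> (\<exists>C. is_circuit S indep C \<and> monochromatic col C)"
    proof (cases "\<exists>C. is_circuit S indep C \<and> monochromatic col C")
      case True then show ?thesis by blast
    next
      case False
      have "card (col ` S) = card S - matroid_rank S indep" using c assms(4,5) by simp
      then show ?thesis using part2[OF assms(3) _ False] by blast
    qed
  qed
qed

end
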